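(* Let $W$ be a real vector space and $w_1,w_2,w_3,w_4\in W$. For $t\in[0,1]$ put $w_1(t)=(1-t)w_1+tw_2$, $w_2(t)=(1-t)w_2+tw_3$, $w_3(t)=(1-t)w_3+tw_1$, $w_4(t)=w_4$. Then $\operatorname{rank}(w_i)_{i=1}^4\ge 2$ if and only if $\operatorname{rank}(w_i(t))_{i=1}^4\ge 2$ for all $0\le t\le 1$.
   Context: The rank of a finite sequence of vectors is the dimension of the linear subspace they span. *)

theory Defs
  imports "HOL-Analysis.Analysis"
begin

definition rank4 :: "'a::real_vector \<Rightarrow> 'a \<Rightarrow> 'a \<Rightarrow> 'a \<Rightarrow> nat" where
  "rank4 a b c d = dim (span {a, b, c, d})"

end

theory Submission
  imports Defs
begin

lemma key:
  fixes w1 w2 w3 :: "'a::real_vector" and s t :: real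
  shows "(s^3 + t^3) *\<^sub>R w1 = s^2 *\<^sub>R (s *\<^sub>R w1 + t *\<^sub>R w2) - (s*t) *\<^sub>R (s *\<^sub>R w2 + t *\<^sub>R w3) + t^2 *\<^sub>R (s *\<^sub>R w3 + t *\<^sub>R w1)"
proof -
  have "s^2 *\<^sub>R (s *\<^sub>R w1 + t *\<^sub>R w2) - (s*t) *\<^sub>R (s *\<^sub>R w2 + t *\<^sub>R w3) + t^2 *\<^sub>R (s *\<^sub>R w3 + t *\<^sub>R w1)
     = (s^2 * s + t^2 * t) *\<^sub>R w1 + (s^2 * t - s * t * s) *\<^sub>R w2 + (t^2 * s - s * t * t) *\<^sub>R w3"
    by (simp add: algebra_simps)
  also have "\<dots> = (s^3 + t^3) *\<^sub>R w1"
    by (simp add: power2_eq_square power3_eq_cube algebra_simps)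
  finally show ?thesis by simp
qed

lemma inspan:
  fixes w1 w2 w3 :: "'a::real_vector" and s t :: real
  assumes D: "s^3 + t^3 \<noteq> 0"
    and a: "s *\<^sub>R w1 + t *\<^sub>R w2 \<in> span S"
    and b: "s *\<^sub>R w2 + t *\<^sub>R w3 \<in> span S"
    and c: "s *\<^sub>R w3 + t *\<^sub>R w1 \<in> span S"
  shows "w1 \<in> span S"
proof -
  have "w1 = (1/(s^3+t^3)) *\<^sub>R ((s^3 + t^3) *\<^sub>R w1)" using D by simp
  also have "\<dots> = (1/(s^3+t^3)) *\<^sub>R (s^2 *\<^sub>R (s *\<^sub>R w1 + t *\<^sub>R w2) - (s*t) *\<^sub>R (s *\<^sub>R w2 + t *\<^sub>R w3) + t^2 *\<^sub>R (s *\<^sub>R w3 + t *\<^sub>R w1))"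
    by (subst key, rule refl)
  finally have e: "w1 = \<dots>" .
  show ?thesis
    by (subst e) (intro span_scale span_add span_diff a b c)
qed

lemma spaneq:
  fixes w1 w2 w3 w4 :: "'a::real_vector" and t :: real
  shows "span {(1 - t) *\<^sub>R w1 + t *\<^sub>R w2, (1 - t) *\<^sub>R w2 + t *\<^sub>R w3,
             (1 - t) *\<^sub>R w3 + t *\<^sub>R w1, w4} = span {w1, w2, w3, w4}"
proof -
  let ?s = "1 - t"
  have D: "?s^3 + t^3 \<noteq> 0"
  proof -
    have "?s^3 + t^3 = 3*(t - 1/2)^2 + 1/4"
      by (simp add: power2_eq_square power3_eq_cube algebra_simps)
    moreover have "3*(t - 1/2)^2 + 1/4 > (0::real)" by (simp add: add_nonneg_pos)
    ultimately show ?thesis by simp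
  qed
  define T where "T = {(1 - t) *\<^sub>R w1 + t *\<^sub>R w2, (1 - t) *\<^sub>R w2 + t *\<^sub>R w3,
             (1 - t) *\<^sub>R w3 + t *\<^sub>R w1, w4}"
  have a: "?s *\<^sub>R w1 + t *\<^sub>R w2 \<in> span T" by (rule span_base) (simp add: T_def)
  have b: "?s *\<^sub>R w2 + t *\<^sub>R w3 \<in> span T" by (rule span_base) (simp add: T_def)
  have c: "?s *\<^sub>R w3 + t *\<^sub>R w1 \<in> span T" by (rule span_base) (simp add: T_def)
  have "w1 \<in> span T" by (rule inspan[OF D a b c])
  moreover have "w2 \<in> span T" by (rule inspan[OF D b c a])
  moreover have "w3 \<in> span T" by (rule inspan[OF D c a b])
  moreover have "w4 \<in> span T" by (rule span_base) (simp add: T_def)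
  ultimately have 1: "{w1, w2, w3, w4} \<subseteq> span T" by simp
  have 2: "T \<subseteq> span {w1, w2, w3, w4}"
    unfolding T_def
    by (simp add: span_add span_scale span_base)
  show ?thesis unfolding T_def[symmetric]
    using 1 2 by (simp add: span_eq)
qed

theorem lemma2p3:
  fixes w1 w2 w3 w4 :: "'a::real_vector"
  shows "rank4 w1 w2 w3 w4 \<ge> 2 \<longleftrightarrow>
    (\<forall>t::real. 0 \<le> t \<and> t \<le> 1 \<longrightarrow>
       rank4 ((1 - t) *\<^sub>R w1 + t *\<^sub>R w2) ((1 - t) *\<^sub>R w2 + t *\<^sub>R w3)
             ((1 - t) *\<^sub>R w3 + t *\<^sub>R w1) w4 \<ge> 2)"
  unfolding rank4_def spaneq by (auto intro!: exI[of _ 0])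

end
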